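(* Let $p$ be an odd prime, $H\cong\mathbb{Z}_p^5$, and $A\le\mathrm{Aut}(H)$ a $p$-group whose fixed-point subgroup $C_H(A)$ has order at least $p^2$; let $\mathcal A=V(H,A)$ and suppose $\mathcal A$ is indecomposable. Let $U,W$ be $\mathcal A$-subgroups with $W<O(\mathcal A)<U$, $|W|=p$ and $|U|=p^4$. Then $\mathcal A$ has a basic set $T$ with $T\subseteq H\setminus U$, $1<|T|\le p^2$ and $W\not\le\mathrm{rad}(T)$.
   Context: $H$ is written additively. An S-ring over $H$ is a subalgebra $\mathcal A\subseteq\mathbb{Q}H$ spanned by $\underline{T}=\sum_{t\in T}t$ for $T$ in a partition $\mathrm{Bs}(\mathcal A)$ of $H$ (basic sets) with $\{0\}\in\mathrm{Bs}(\mathcal A)$ and $-T\in\mathrm{Bs}(\mathcal A)$ for all $T$. $V(H,A)$ is the S-ring whose basic sets are the $A$-orbits on $H$. A subgroup $K$ is an $\mathcal A$-subgroup if $\underline K\in\mathcal A$; $\mathrm{rad}(S)=\{h\in H:h+S=S\}$; $O(\mathcal A)=\{h:\{h\}\in\mathrm{Bs}(\mathcal A)\}$. If $F\le E$ are $\mathcal A$-subgroups with $F\le\mathrm{rad}(T)$ for every basic set $T\subseteq H\setminus E$, $\mathcal A$ is an $E/F$-wreath product; it is indecomposable if it is not such for any $E\ne H$, $F\ne\{0\}$. *)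

theory Defs
  imports Main "HOL-Computational_Algebra.Primes"
begin

definition nsmul :: "nat \<Rightarrow> 'a::ab_group_add \<Rightarrow> 'a" where
  "nsmul n x = (((+) x) ^^ n) 0"

definition subgrp :: "'a::ab_group_add set \<Rightarrow> bool" where
  "subgrp K \<longleftrightarrow> 0 \<in> K \<and> (\<forall>x\<in>K. \<forall>y\<in>K. x + y \<in> K) \<and> (\<forall>x\<in>K. - x \<in> K)"

definition is_aut :: "('a::ab_group_add \<Rightarrow> 'a) \<Rightarrow> bool" where
  "is_aut f \<longleftrightarrow> bij f \<and> (\<forall>x y. f (x + y) = f x + f y)"

definition aut_subgroup :: "('a::ab_group_add \<Rightarrow> 'a) set \<Rightarrow> bool" where
  "aut_subgroup A \<longleftrightarrow> (\<forall>f\<in>A. is_aut f) \<and> id \<in> A \<and>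
     (\<forall>f\<in>A. \<forall>g\<in>A. f \<circ> g \<in> A) \<and> (\<forall>f\<in>A. inv f \<in> A)"

definition fixpts :: "('a \<Rightarrow> 'a) set \<Rightarrow> 'a set" where
  "fixpts A = {h. \<forall>f\<in>A. f h = h}"

(* basic sets of V(H,A): the A-orbits on H *)
definition orbitsV :: "('a \<Rightarrow> 'a) set \<Rightarrow> 'a set set" where
  "orbitsV A = {(\<lambda>f. f x) ` A | x. True}"

(* K is an S-subgroup w.r.t. the basic sets Bs, i.e. underline K lies in the span of the
   basic-set sums; since Bs is a partition this means K is a union of basic sets *)
definition S_subgroup :: "'a::ab_group_add set set \<Rightarrow> 'a set \<Rightarrow> bool" where
  "S_subgroup Bs K \<longleftrightarrow> subgrp K \<and> (\<forall>T\<in>Bs. T \<subseteq> K \<or> T \<inter> K = {})"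

definition rad :: "'a::ab_group_add set \<Rightarrow> 'a set" where
  "rad S = {h. (\<lambda>s. h + s) ` S = S}"

definition thin_part :: "'a set set \<Rightarrow> 'a set" where
  "thin_part Bs = {h. {h} \<in> Bs}"

definition wreath :: "'a::ab_group_add set set \<Rightarrow> 'a set \<Rightarrow> 'a set \<Rightarrow> bool" where
  "wreath Bs E F \<longleftrightarrow> S_subgroup Bs E \<and> S_subgroup Bs F \<and> F \<subseteq> E \<and>
     (\<forall>T\<in>Bs. T \<subseteq> UNIV - E \<longrightarrow> F \<subseteq> rad T)"

definition indecomposable :: "'a::ab_group_add set set \<Rightarrow> bool" where
  "indecomposable Bs \<longleftrightarrow> \<not> (\<exists>E F. wreath Bs E F \<and> E \<noteq> UNIV \<and> F \<noteq> {0})"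

end

theory Submission
  imports Defs "HOL-Number_Theory.Number_Theory"
begin


lemma nsmul_0[simp]: "nsmul 0 x = 0" by (simp add: nsmul_def)
lemma nsmul_Suc[simp]: "nsmul (Suc n) x = x + nsmul n x" by (simp add: nsmul_def)

lemma nsmul_add: "nsmul (m+n) x = nsmul m x + nsmul n x"
  by (induct m) (simp_all add: add.assoc)

lemma nsmul_mult: "nsmul (m*n) x = nsmul m (nsmul n x)"
  by (induct m) (simp_all add: nsmul_add)

lemma nsmul_plus: "nsmul n (x+y) = nsmul n x + nsmul n y"
  by (induct n) (simp_all add: algebra_simps)

lemma nsmul_zero[simp]: "nsmul n (0::'a::ab_group_add) = 0"
  by (induct n) simp_all

lemma nsmul_uminus: "nsmul n (- x) = - nsmul n (x::'a::ab_group_add)"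
  by (induct n) (simp_all add: algebra_simps)

lemma nsmul_diff: "nsmul n (x - y) = nsmul n x - nsmul n (y::'a::ab_group_add)"
  using nsmul_plus[of n x "-y"] by (simp add: nsmul_uminus)

lemma nsmul_one[simp]: "nsmul 1 x = x" by (simp add: nsmul_def)

lemma additive_zero: fixes f :: "'a::ab_group_add \<Rightarrow> 'a" shows "\<forall>x y. f (x + y) = f x + f y \<Longrightarrow> f 0 = (0::'a::ab_group_add)"
proof -
  assume a: "\<forall>x y. f (x + y) = f x + f y"
  have "f (0 + 0) = f 0 + f 0" using a by blast
  then show ?thesis by simp
qed

lemma additive_minus: fixes f :: "'a::ab_group_add \<Rightarrow> 'a" shows "\<forall>x y. f (x + y) = f x + f y \<Longrightarrow> f (x - y) = f x - (f (y::'a::ab_group_add) :: 'a)"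
proof -
  assume a: "\<forall>x y. f (x + y) = f x + f y"
  have h: "f x = f (x - y) + f y" using a by (metis diff_add_cancel)
  show ?thesis by (subst h) simp
qed

lemma additive_nsmul: fixes f :: "'a::ab_group_add \<Rightarrow> 'a" shows "\<forall>x y. f (x + y) = f x + f y \<Longrightarrow> f (nsmul n x) = nsmul n (f (x::'a::ab_group_add))"
  by (induct n) (simp_all add: additive_zero)

lemma subgrp_nsmul: "subgrp K \<Longrightarrow> x \<in> K \<Longrightarrow> nsmul n x \<in> K"
proof (induct n)
  case 0 then show ?case by (simp add: subgrp_def)
next
  case (Suc n) then show ?case unfolding subgrp_def nsmul_Suc by blast
qed

lemma subgrp_diff: "subgrp K \<Longrightarrow> x \<in> K \<Longrightarrow> y \<in> K \<Longrightarrow> x - y \<in> K"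
proof -
  assume "subgrp K" "x \<in> K" "y \<in> K"
  then have "x + - y \<in> K" unfolding subgrp_def by blast
  then show ?thesis by (simp only: diff_conv_add_uminus)
qed

lemma nsmul_mod:
  assumes "nsmul p x = 0"
  shows "nsmul n x = nsmul (n mod p) x"
proof -
  have "n = (n div p) * p + n mod p" by simp
  then have "nsmul n x = nsmul ((n div p) * p) x + nsmul (n mod p) x"
    by (metis nsmul_add)
  also have "nsmul ((n div p) * p) x = 0" by (simp add: nsmul_mult assms)
  finally show ?thesis by simp
qed

lemma nsmul_inverse:
  assumes "prime p" "\<not> p dvd k" "nsmul p y = 0"
  obtains m where "nsmul m (nsmul k y) = y"
proof -
  have "coprime p k" using assms(1,2) by (rule prime_imp_coprime)
  then have "coprime k p" by (simp add: coprime_commute)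
  then obtain m where m: "[k * m = Suc 0] (mod p)" using cong_solve_coprime_nat by blast
  have "nsmul m (nsmul k y) = nsmul (k*m) y" by (simp add: nsmul_mult[symmetric] mult.commute)
  also have "\<dots> = nsmul ((k*m) mod p) y" using nsmul_mod[OF assms(3)] by blast
  also have "(k*m) mod p = 1"
  proof -
    have "1 < p" using assms(1) prime_gt_1_nat by blast
    then show ?thesis using m unfolding cong_def by simp
  qed
  finally show ?thesis using that by simp
qed

lemma subgrp_nsmul_cancel:
  assumes "prime p" "\<not> p dvd k" "nsmul p y = 0" "subgrp K" "nsmul k y \<in> K"
  shows "y \<in> K"
proof -
  obtain m where "nsmul m (nsmul k y) = y" using nsmul_inverse assms(1-3) by blast
  then show ?thesis using subgrp_nsmul[OF assms(4,5), of m] by simp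
qed

lemma rad_0: "0 \<in> rad S" by (simp add: rad_def)

lemma rad_add: "a \<in> rad S \<Longrightarrow> b \<in> rad S \<Longrightarrow> a + b \<in> rad S"
proof -
  assume a: "a \<in> rad S" and b: "b \<in> rad S"
  have "(\<lambda>s. (a+b) + s) ` S = (\<lambda>s. a + s) ` ((\<lambda>s. b + s) ` S)"
    by (simp add: image_image add.assoc)
  then show ?thesis using a b by (simp add: rad_def)
qed

lemma rad_nsmul: "a \<in> rad S \<Longrightarrow> nsmul n a \<in> rad S"
  by (induct n) (simp_all add: rad_0 rad_add)

lemma rad_translate: "d \<in> rad S \<Longrightarrow> d \<in> rad ((\<lambda>s. c + s) ` S)"
proof -
  assume d: "d \<in> rad S"
  have "(\<lambda>s. d + s) ` ((\<lambda>s. c + s) ` S) = (\<lambda>s. c + s) ` ((\<lambda>s. d + s) ` S)"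
    by (simp add: image_image algebra_simps)
  then show ?thesis using d by (simp add: rad_def)
qed

lemma rad_scale: "d \<in> rad S \<Longrightarrow> nsmul k d \<in> rad (nsmul k ` S)"
proof -
  assume d: "d \<in> rad S"
  have "(\<lambda>s. nsmul k d + s) ` (nsmul k ` S) = nsmul k ` ((\<lambda>s. d + s) ` S)"
    by (simp add: image_image nsmul_plus)
  then show ?thesis using d by (simp add: rad_def)
qed





definition orb :: "('a \<Rightarrow> 'a) set \<Rightarrow> 'a \<Rightarrow> 'a set" where
  "orb A x = (\<lambda>f. f x) ` A"

lemma orbitsV_orb: "T \<in> orbitsV A \<longleftrightarrow> (\<exists>x. T = orb A x)"
  by (auto simp: orbitsV_def orb_def)

lemma orb_in: "orb A x \<in> orbitsV A"
  using orbitsV_orb by blast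

context
  fixes A :: "('a::ab_group_add \<Rightarrow> 'a) set"
  assumes AS: "aut_subgroup A"
begin

lemma A_aut: "f \<in> A \<Longrightarrow> is_aut f"
  using AS by (simp add: aut_subgroup_def)

lemma A_add: "f \<in> A \<Longrightarrow> \<forall>x y. f (x + y) = f x + f y"
  using A_aut by (simp add: is_aut_def)

lemma A_bij: "f \<in> A \<Longrightarrow> bij f"
  using A_aut by (simp add: is_aut_def)

lemma A_id: "id \<in> A" using AS by (simp add: aut_subgroup_def)
lemma A_comp: "f \<in> A \<Longrightarrow> g \<in> A \<Longrightarrow> f \<circ> g \<in> A" using AS by (simp add: aut_subgroup_def)
lemma A_inv: "f \<in> A \<Longrightarrow> inv_into UNIV f \<in> A" using AS by (simp add: aut_subgroup_def)

lemma A_inv_left: "f \<in> A \<Longrightarrow> inv_into UNIV f (f x) = x"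
  using A_bij bij_is_inj inv_f_f by metis
lemma A_inv_right: "f \<in> A \<Longrightarrow> f (inv_into UNIV f x) = x"
  using A_bij bij_is_surj surj_f_inv_f by metis

lemma orb_self: "x \<in> orb A x"
  using A_id unfolding orb_def by (metis id_apply image_eqI)

lemma orb_nonempty: "orb A x \<noteq> {}"
  using orb_self by blast

lemma orb_move: "f \<in> A \<Longrightarrow> orb A (f x) = orb A x"
proof
  assume f: "f \<in> A"
  show "orb A (f x) \<subseteq> orb A x"
  proof
    fix z assume "z \<in> orb A (f x)"
    then obtain g where g: "g \<in> A" "z = g (f x)" by (auto simp: orb_def)
    then have "z = (g \<circ> f) x" by simp
    then show "z \<in> orb A x" unfolding orb_def by (rule image_eqI[OF _ A_comp[OF g(1) f]])
  qed
  show "orb A x \<subseteq> orb A (f x)"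
  proof
    fix z assume "z \<in> orb A x"
    then obtain g where g: "g \<in> A" "z = g x" by (auto simp: orb_def)
    then have "z = (g \<circ> inv_into UNIV f) (f x)" using A_inv_left[OF f] by simp
    then show "z \<in> orb A (f x)" unfolding orb_def by (rule image_eqI[OF _ A_comp[OF g(1) A_inv[OF f]]])
  qed
qed

lemma orb_mem_eq: "y \<in> orb A x \<Longrightarrow> orb A y = orb A x"
proof -
  assume "y \<in> orb A x"
  then obtain f where "f \<in> A" "y = f x" by (auto simp: orb_def)
  then show ?thesis using orb_move by simp
qed

lemma orb_meet_eq: "z \<in> orb A x \<Longrightarrow> z \<in> orb A y \<Longrightarrow> orb A x = orb A y"
  using orb_mem_eq by metis

lemma orb_fix: "(\<forall>f\<in>A. f x = x) \<Longrightarrow> orb A x = {x}"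
proof -
  assume a: "\<forall>f\<in>A. f x = x"
  have "orb A x \<subseteq> {x}" using a by (auto simp: orb_def)
  then show ?thesis using orb_self by blast
qed

lemma fix_orb: "orb A x = {x} \<Longrightarrow> f \<in> A \<Longrightarrow> f x = x"
  by (auto simp: orb_def)

lemma thin_fix: "h \<in> thin_part (orbitsV A) \<longleftrightarrow> (\<forall>f\<in>A. f h = h)"
proof
  assume "h \<in> thin_part (orbitsV A)"
  then obtain x where "{h} = orb A x" by (auto simp: thin_part_def orbitsV_orb)
  moreover then have "x = h" using orb_self by blast
  ultimately show "\<forall>f\<in>A. f h = h" using fix_orb by metis
next
  assume "\<forall>f\<in>A. f h = h"
  then have "orb A h = {h}" by (rule orb_fix)
  then show "h \<in> thin_part (orbitsV A)" using orb_in[of A h] by (simp add: thin_part_def)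
qed

lemma orb_translate: "(\<forall>f\<in>A. f c = c) \<Longrightarrow> orb A (c + x) = (\<lambda>s. c + s) ` orb A x"
proof -
  assume c: "\<forall>f\<in>A. f c = c"
  have "\<And>f. f \<in> A \<Longrightarrow> f (c + x) = c + f x"
  proof -
    fix f assume f: "f \<in> A"
    have "f (c + x) = f c + f x" using A_add[OF f] by blast
    then show "f (c + x) = c + f x" using c f by simp
  qed
  then show ?thesis unfolding orb_def image_image by (rule image_cong[OF refl])
qed

lemma orb_scale: "orb A (nsmul k x) = nsmul k ` orb A x"
proof -
  have "\<And>f. f \<in> A \<Longrightarrow> f (nsmul k x) = nsmul k (f x)"
    using A_add additive_nsmul by blast
  then show ?thesis unfolding orb_def image_image by (rule image_cong[OF refl])
qed

lemma S_sub_inv: "S_subgroup (orbitsV A) U \<Longrightarrow> u \<in> U \<Longrightarrow> f \<in> A \<Longrightarrow> f u \<in> U"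
proof -
  assume S: "S_subgroup (orbitsV A) U" and u: "u \<in> U" and f: "f \<in> A"
  have "orb A u \<subseteq> U \<or> orb A u \<inter> U = {}" using S orb_in[of A u] by (simp add: S_subgroup_def)
  then have "orb A u \<subseteq> U" using u orb_self by blast
  then show "f u \<in> U" using f by (auto simp: orb_def)
qed

lemma S_sub_out: "S_subgroup (orbitsV A) U \<Longrightarrow> x \<notin> U \<Longrightarrow> f \<in> A \<Longrightarrow> f x \<notin> U"
  using S_sub_inv A_inv A_inv_left by metis

end



lemma fermat_p:
  fixes k p :: nat assumes p: "prime p" shows "[k ^ p = k] (mod p)"
proof (cases "p dvd k")
  case True
  have "p dvd k ^ p" using True p prime_gt_0_nat dvd_power[of p k] dvd_trans
    by (metis dvd_power_le dvd_refl prime_ge_1_nat)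
  then show ?thesis using True by (simp add: cong_def dvd_eq_mod_eq_0)
next
  case False
  have "[k ^ (p - 1) = 1] (mod p)" using fermat_theorem[OF p False] .
  then have "[k * k ^ (p - 1) = k * 1] (mod p)" by (rule cong_scalar_left)
  moreover have "k * k ^ (p - 1) = k ^ p" using p prime_gt_0_nat
    by (metis Suc_diff_1 power_Suc)
  ultimately show ?thesis by simp
qed

lemma fermat_pp:
  fixes k p :: nat assumes p: "prime p" shows "[k ^ (p ^ K) = k] (mod p)"
proof (induct K)
  case 0 then show ?case by simp
next
  case (Suc K)
  have "k ^ (p ^ Suc K) = (k ^ (p ^ K)) ^ p" by (simp add: power_mult[symmetric] mult.commute)
  moreover have "[(k ^ (p ^ K)) ^ p = k ^ p] (mod p)" using Suc by (rule cong_pow)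
  ultimately show ?case using fermat_p[OF p, of k] by (metis cong_trans)
qed

lemma coset_decomp:
  fixes U :: "'a::{ab_group_add,finite} set" and p :: nat
  assumes p: "prime p" and np: "\<forall>x::'a. nsmul p x = 0" and U: "subgrp U"
    and cU: "p * card U = card (UNIV::'a set)" and x0: "x0 \<notin> U"
  shows "\<exists>k<p. y - nsmul k x0 \<in> U"
proof -
  define Cs where "Cs k = (\<lambda>u. nsmul k x0 + u) ` U" for k
  have cardC: "card (Cs k) = card U" for k
    unfolding Cs_def by (rule card_image) (simp add: inj_on_def)
  have disj_lt: "Cs i \<inter> Cs j = {}" if ij: "i < j" "j < p" for i j
  proof (rule ccontr)
    assume "Cs i \<inter> Cs j \<noteq> {}"
    then obtain u u' where uu: "u \<in> U" "u' \<in> U" "nsmul i x0 + u = nsmul j x0 + u'"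
      unfolding Cs_def by blast
    have "nsmul j x0 = nsmul i x0 + nsmul (j - i) x0"
      using ij nsmul_add[of i "j - i" x0] by simp
    then have "nsmul (j - i) x0 = u - u'" using uu(3) by (simp add: algebra_simps)
    then have "nsmul (j - i) x0 \<in> U" using subgrp_diff[OF U uu(1,2)] by simp
    moreover have "\<not> p dvd (j - i)" using ij by (simp add: nat_dvd_not_less)
    ultimately have "x0 \<in> U" using subgrp_nsmul_cancel[OF p _ _ U] np by blast
    then show False using x0 by simp
  qed
  have disj: "\<forall>i\<in>{..<p}. \<forall>j\<in>{..<p}. i \<noteq> j \<longrightarrow> Cs i \<inter> Cs j = {}"
  proof (intro ballI impI)
    fix i j assume "i \<in> {..<p}" "j \<in> {..<p}" "i \<noteq> j"
    then show "Cs i \<inter> Cs j = {}"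
      using disj_lt[of i j] disj_lt[of j i] by (cases "i < j") (auto simp: Int_commute)
  qed
  have "card (\<Union>k\<in>{..<p}. Cs k) = (\<Sum>k\<in>{..<p}. card (Cs k))"
    by (rule card_UN_disjoint) (use disj in auto)
  also have "\<dots> = p * card U" using cardC by simp
  finally have "card (\<Union>k\<in>{..<p}. Cs k) = card (UNIV::'a set)" using cU by simp
  then have "(\<Union>k\<in>{..<p}. Cs k) = UNIV"
    by (intro card_subset_eq) auto
  then obtain k where "k < p" "y \<in> Cs k" by blast
  then show ?thesis unfolding Cs_def by auto
qed

context
  fixes A :: "('a::ab_group_add \<Rightarrow> 'a) set"
  assumes AS: "aut_subgroup A"
begin

lemma orb_card_dvd:
  assumes fin: "finite A"
  shows "card (orb A x) dvd card A"
proof -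
  define S where "S = {f\<in>A. f x = x}"
  define Fib where "Fib t = {f\<in>A. f x = t}" for t
  have finO: "finite (orb A x)" using fin by (simp add: orb_def)
  have AU: "A = (\<Union>t\<in>orb A x. Fib t)" by (auto simp: Fib_def orb_def)
  have "card (\<Union>t\<in>orb A x. Fib t) = (\<Sum>t\<in>orb A x. card (Fib t))"
    by (rule card_UN_disjoint) (use fin finO in \<open>auto simp: Fib_def\<close>)
  then have "card A = (\<Sum>t\<in>orb A x. card (Fib t))"
    by (simp only: AU[symmetric])
  also have "\<dots> = (\<Sum>t\<in>orb A x. card S)"
  proof (rule sum.cong[OF refl])
    fix t assume "t \<in> orb A x"
    then obtain g where g: "g \<in> A" "t = g x" by (auto simp: orb_def)
    have inj: "inj_on (\<lambda>h. g \<circ> h) S"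
    proof (rule inj_onI)
      fix h1 h2 assume "g \<circ> h1 = g \<circ> h2"
      then have "\<And>y. g (h1 y) = g (h2 y)" by (metis comp_apply)
      then have "\<And>y. h1 y = h2 y" using A_inv_left[OF AS g(1)] by metis
      then show "h1 = h2" by (rule ext)
    qed
    have im: "(\<lambda>h. g \<circ> h) ` S = Fib t"
    proof
      show "(\<lambda>h. g \<circ> h) ` S \<subseteq> Fib t"
        using g A_comp[OF AS] by (auto simp: S_def Fib_def)
      show "Fib t \<subseteq> (\<lambda>h. g \<circ> h) ` S"
      proof
        fix f assume f: "f \<in> Fib t"
        define h where "h = inv_into UNIV g \<circ> f"
        have hA: "h \<in> A" unfolding h_def using f A_comp[OF AS] A_inv[OF AS g(1)] by (simp add: Fib_def)
        have hx: "h x = x" unfolding h_def using f g A_inv_left[OF AS g(1)] by (simp add: Fib_def)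
        have "g \<circ> h = f" unfolding h_def using A_inv_right[OF AS g(1)] by (simp add: comp_def)
        then show "f \<in> (\<lambda>h. g \<circ> h) ` S" using hA hx by (auto simp: S_def)
      qed
    qed
    show "card (Fib t) = card S" using card_image[OF inj] im by simp
  qed
  also have "\<dots> = card (orb A x) * card S" by simp
  finally show ?thesis by simp
qed

definition GA :: "('a \<Rightarrow> 'a) monoid" where
  "GA = \<lparr>carrier = A, monoid.mult = (\<circ>), one = id\<rparr>"

lemma GA_group: "group GA"
proof (rule groupI)
  show "\<And>x y. x \<in> carrier GA \<Longrightarrow> y \<in> carrier GA \<Longrightarrow> x \<otimes>\<^bsub>GA\<^esub> y \<in> carrier GA"
    using A_comp[OF AS] by (simp add: GA_def)
  show "\<one>\<^bsub>GA\<^esub> \<in> carrier GA" using A_id[OF AS] by (simp add: GA_def)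
  show "\<And>x y z. x \<in> carrier GA \<Longrightarrow> y \<in> carrier GA \<Longrightarrow> z \<in> carrier GA \<Longrightarrow>
      x \<otimes>\<^bsub>GA\<^esub> y \<otimes>\<^bsub>GA\<^esub> z = x \<otimes>\<^bsub>GA\<^esub> (y \<otimes>\<^bsub>GA\<^esub> z)"
    by (simp add: GA_def comp_assoc)
  show "\<And>x. x \<in> carrier GA \<Longrightarrow> \<one>\<^bsub>GA\<^esub> \<otimes>\<^bsub>GA\<^esub> x = x" by (simp add: GA_def)
  show "\<And>x. x \<in> carrier GA \<Longrightarrow> \<exists>y\<in>carrier GA. y \<otimes>\<^bsub>GA\<^esub> x = \<one>\<^bsub>GA\<^esub>"
  proof -
    fix x assume x: "x \<in> carrier GA"
    then have xA: "x \<in> A" by (simp add: GA_def)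
    have "inv_into UNIV x \<circ> x = id" using A_inv_left[OF AS xA] by (simp add: comp_def id_def)
    then show "\<exists>y\<in>carrier GA. y \<otimes>\<^bsub>GA\<^esub> x = \<one>\<^bsub>GA\<^esub>"
      using A_inv[OF AS xA] by (auto simp: GA_def)
  qed
qed

lemma GA_pow: "f [^]\<^bsub>GA\<^esub> (n::nat) = f ^^ n"
  by (induct n) (simp_all add: GA_def funpow_Suc_right funpow_swap1)

lemma A_pow_card: "finite A \<Longrightarrow> f \<in> A \<Longrightarrow> f ^^ (card A) = id"
proof -
  assume "finite A" "f \<in> A"
  then have e0: "f [^]\<^bsub>GA\<^esub> order GA = \<one>\<^bsub>GA\<^esub>"
    using group.pow_order_eq_1[OF GA_group] by (simp add: GA_def)
  have e1: "f ^^ card A = f [^]\<^bsub>GA\<^esub> card A" by (rule GA_pow[symmetric])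
  have e2: "order GA = card A" by (simp add: order_def GA_def)
  have e3: "\<one>\<^bsub>GA\<^esub> = id" by (simp add: GA_def)
  show ?thesis using e0 unfolding e1 e2 e3 .
qed

end



lemma nsmul_inv_all:
  assumes p: "prime p" and k: "\<not> p dvd k" and np: "\<forall>x::'a::ab_group_add. nsmul p x = 0"
  obtains m where "\<And>z::'a. nsmul m (nsmul k z) = z" "\<And>z::'a. nsmul k (nsmul m z) = z"
proof -
  have "coprime p k" using p k by (rule prime_imp_coprime)
  then have "coprime k p" by (simp add: coprime_commute)
  then obtain m where m: "[k * m = Suc 0] (mod p)" using cong_solve_coprime_nat by blast
  have km: "(k*m) mod p = 1"
  proof -
    have "1 < p" using p prime_gt_1_nat by blast
    then show ?thesis using m unfolding cong_def by simp
  qed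
  have e: "nsmul (k*m) z = z" for z :: 'a
  proof -
    have "nsmul (k*m) z = nsmul ((k*m) mod p) z" using nsmul_mod np by blast
    then show ?thesis using km by simp
  qed
  show ?thesis
  proof (rule that)
    fix z :: 'a
    show "nsmul m (nsmul k z) = z" using e[of z] by (simp add: nsmul_mult[symmetric] mult.commute)
    show "nsmul k (nsmul m z) = z" using e[of z] by (simp add: nsmul_mult[symmetric])
  qed
qed

lemma coset_trivial:
  fixes A :: "('a::{ab_group_add,finite} \<Rightarrow> 'a) set" and p :: nat
  assumes AS: "aut_subgroup A" and cA: "card A = p ^ K" and p: "prime p"
    and np: "\<forall>x::'a. nsmul p x = 0" and SU: "S_subgroup (orbitsV A) U"
    and cU: "p * card U = card (UNIV::'a set)" and x0: "x0 \<notin> U" and f: "f \<in> A"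
  shows "f x0 - x0 \<in> U"
proof -
  have U: "subgrp U" using SU by (simp add: S_subgroup_def)
  have finA: "finite A" using cA p by (metis card_ge_0_finite prime_gt_0_nat zero_less_power)
  obtain k where k: "k < p" "f x0 - nsmul k x0 \<in> U"
    using coset_decomp[OF p np U cU x0] by blast
  define b where "b = f x0 - nsmul k x0"
  have bU: "b \<in> U" using k b_def by simp
  have fadd: "\<forall>x y. f (x + y) = f x + f y" using A_add[OF AS f] .
  have it: "(f ^^ n) x0 - nsmul (k ^ n) x0 \<in> U" for n
  proof (induct n)
    case 0 then show ?case using U by (simp add: subgrp_def)
  next
    case (Suc n)
    define a where "a = (f ^^ n) x0 - nsmul (k ^ n) x0"
    have aU: "a \<in> U" using Suc a_def by simp
    have "(f ^^ Suc n) x0 = f (a + nsmul (k ^ n) x0)" by (simp add: a_def)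
    also have "\<dots> = f a + nsmul (k ^ n) (f x0)" using fadd additive_nsmul[OF fadd] by simp
    also have "f x0 = b + nsmul k x0" by (simp add: b_def)
    also have "nsmul (k ^ n) (b + nsmul k x0) = nsmul (k ^ n) b + nsmul (k ^ Suc n) x0"
      by (simp add: nsmul_plus nsmul_mult[symmetric] mult.commute)
    finally have "(f ^^ Suc n) x0 - nsmul (k ^ Suc n) x0 = f a + nsmul (k ^ n) b"
      by (simp add: algebra_simps)
    moreover have "f a \<in> U" using S_sub_inv[OF AS SU aU f] .
    moreover have "nsmul (k ^ n) b \<in> U" using subgrp_nsmul[OF U bU] .
    ultimately show ?case using U by (simp add: subgrp_def)
  qed
  have "(f ^^ card A) = id" using A_pow_card[OF AS finA f] .
  then have "x0 - nsmul (k ^ (p ^ K)) x0 \<in> U" using it[of "card A"] cA by simp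
  moreover have "nsmul (k ^ (p ^ K)) x0 = nsmul k x0"
  proof -
    have "(k ^ (p ^ K)) mod p = k mod p" using fermat_pp[OF p, of k K] by (simp add: cong_def)
    then show ?thesis using nsmul_mod[of p x0] np by metis
  qed
  ultimately have main: "x0 - nsmul k x0 \<in> U" by simp
  consider "k = 0" | "k = 1" | "k \<ge> 2" by linarith
  then show ?thesis
  proof cases
    case 1
    then have "f x0 \<in> U" using k by simp
    then show ?thesis using S_sub_out[OF AS SU x0 f] by simp
  next
    case 2
    then show ?thesis using k by simp
  next
    case 3
    have "nsmul k x0 = x0 + nsmul (k - 1) x0" using 3 by (metis Suc_diff_1 nsmul_Suc not_numeral_le_zero neq0_conv)
    then have "nsmul (k - 1) x0 = - (x0 - nsmul k x0)" by simp
    moreover have "- (x0 - nsmul k x0) \<in> U" using main U unfolding subgrp_def by blast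
    ultimately have "nsmul (k - 1) x0 \<in> U" by simp
    moreover have "\<not> p dvd (k - 1)" using 3 k by (simp add: nat_dvd_not_less)
    ultimately have "x0 \<in> U" using subgrp_nsmul_cancel[OF p _ _ U] np by blast
    then show ?thesis using x0 by simp
  qed
qed




theorem lemma6p7:
  fixes p :: nat and A :: "('a::{ab_group_add,finite} \<Rightarrow> 'a) set" and U W :: "'a set"
  assumes "prime p" and "odd p"
    and "card (UNIV :: 'a set) = p ^ 5" and "\<forall>x::'a. nsmul p x = 0"
    and "aut_subgroup A" and "\<exists>k. card A = p ^ k"
    and "card (fixpts A) \<ge> p ^ 2"
    and "indecomposable (orbitsV A)"
    and "S_subgroup (orbitsV A) U" and "S_subgroup (orbitsV A) W"
    and "W \<subset> thin_part (orbitsV A)" and "thin_part (orbitsV A) \<subset> U"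
    and "card W = p" and "card U = p ^ 4"
  shows "\<exists>T\<in>orbitsV A. T \<subseteq> UNIV - U \<and> 1 < card T \<and> card T \<le> p ^ 2 \<and> \<not> W \<subseteq> rad T"
proof (rule ccontr)
  note p = assms(1) and np = assms(4) and AS = assms(5) and SU = assms(9) and SW = assms(10)
  assume neg: "\<not> (\<exists>T\<in>orbitsV A. T \<subseteq> UNIV - U \<and> 1 < card T \<and> card T \<le> p ^ 2 \<and> \<not> W \<subseteq> rad T)"
  obtain K where cA: "card A = p ^ K" using assms(6) by blast
  have p1: "1 < p" using p prime_gt_1_nat by blast
  have U: "subgrp U" using SU by (simp add: S_subgroup_def)
  have Wg: "subgrp W" using SW by (simp add: S_subgroup_def)
  define C where "C = thin_part (orbitsV A)"
  have Cfix: "c \<in> C \<longleftrightarrow> (\<forall>f\<in>A. f c = c)" for c unfolding C_def using thin_fix[OF AS] by blast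
  have WC: "W \<subset> C" and CU: "C \<subset> U" using assms(11,12) C_def by auto
  have cU: "p * card U = card (UNIV::'a set)" using assms(3,14) by (simp add: eval_nat_numeral)
  have UnU: "U \<noteq> UNIV"
  proof
    assume "U = UNIV"
    then have "p ^ 4 = p ^ 5" using assms(3,14) by simp
    then show False using p1 by simp
  qed
  have Wn0: "W \<noteq> {0}" using assms(13) p1 by auto
  have WU: "W \<subseteq> U" using WC CU by blast
  have nw: "\<not> wreath (orbitsV A) U W"
  proof
    assume "wreath (orbitsV A) U W"
    then have "\<exists>E F. wreath (orbitsV A) E F \<and> E \<noteq> UNIV \<and> F \<noteq> {0}" using UnU Wn0 by blast
    then show False using assms(8) unfolding indecomposable_def by blast
  qed
  have "\<not> (\<forall>T\<in>orbitsV A. T \<subseteq> UNIV - U \<longrightarrow> W \<subseteq> rad T)"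
  proof
    assume "\<forall>T\<in>orbitsV A. T \<subseteq> UNIV - U \<longrightarrow> W \<subseteq> rad T"
    then have "wreath (orbitsV A) U W" unfolding wreath_def using SU SW WU by blast
    then show False using nw by blast
  qed
  then obtain T0 where T0: "T0 \<in> orbitsV A" "T0 \<subseteq> UNIV - U" "\<not> W \<subseteq> rad T0"
    by blast
  obtain x0 where x0: "T0 = orb A x0" using orbitsV_orb[of T0 A] T0(1) by blast
  have x0U: "x0 \<notin> U" using T0(2) orb_self[OF AS, of x0] x0 by blast
  have "card T0 > 1"
  proof (rule ccontr)
    assume "\<not> card T0 > 1"
    moreover have "x0 \<in> T0" using orb_self[OF AS] x0 by simp
    moreover have "finite T0" by simp
    ultimately have "\<forall>a\<in>T0. \<forall>b\<in>T0. a = b" using card_le_Suc0_iff_eq[of T0] by simp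
    with \<open>x0 \<in> T0\<close> have "T0 = {x0}" by blast
    then have "x0 \<in> C" using T0(1) by (simp add: C_def thin_part_def)
    then show False using CU x0U by blast
  qed
  then have c1: "1 < card T0" .
  have cT0big: "card T0 > p ^ 2"
  proof (rule ccontr)
    assume "\<not> card T0 > p ^ 2"
    then have "card T0 \<le> p ^ 2" by simp
    then have "T0 \<subseteq> UNIV - U \<and> 1 < card T0 \<and> card T0 \<le> p ^ 2 \<and> \<not> W \<subseteq> rad T0"
      using T0(2,3) c1 by (intro conjI)
    then have "\<exists>T\<in>orbitsV A. T \<subseteq> UNIV - U \<and> 1 < card T \<and> card T \<le> p ^ 2 \<and> \<not> W \<subseteq> rad T"
      using T0(1) by (rule bexI)
    then show False using neg by (rule notE[rotated])
  qed
  have "0 < p ^ K" using p1 by simp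
  then have cA0: "card A \<noteq> 0" unfolding cA by simp
  have finA: "finite A"
  proof (rule ccontr)
    assume "infinite A"
    then have "card A = 0" by (rule card.infinite)
    then show False using cA0 by contradiction
  qed
  have "card T0 dvd p ^ K" using orb_card_dvd[OF AS finA, of x0] x0 cA by simp
  then obtain j where j: "card T0 = p ^ j" unfolding divides_primepow_nat[OF p] by blast
  have "j > 2" using power_less_imp_less_exp[OF p1, of 2 j] cT0big j by simp
  then have "p ^ 3 \<le> p ^ j" using p1 by (intro power_increasing) simp_all
  then have cT0: "card T0 \<ge> p ^ 3" using j by simp
  obtain w where w: "w \<in> W" "w \<notin> rad T0" using T0(3) by blast
  define X where "X = (\<lambda>u. x0 + u) ` U"
  have inX: "y \<in> X \<longleftrightarrow> y - x0 \<in> U" for y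
    unfolding X_def by (auto simp: image_iff) (metis add.commute diff_add_cancel)
  have cX: "card X = p ^ 4" unfolding X_def using assms(14) by (simp add: card_image)
  have orbX: "orb A y \<subseteq> X" if "y \<in> X" for y
  proof
    fix z assume "z \<in> orb A y"
    then obtain g where g: "g \<in> A" "z = g y" by (auto simp: orb_def)
    have gadd: "\<forall>x y. g (x + y) = g x + g y" using A_add[OF AS g(1)] .
    have e: "g (y - x0) = g y - g x0" using additive_minus[OF gadd, of y x0] .
    have "g (y - x0) \<in> U" using S_sub_inv[OF AS SU _ g(1)] that inX by blast
    moreover have "g x0 - x0 \<in> U" using coset_trivial[OF AS cA p np SU cU x0U g(1)] .
    ultimately have "g (y - x0) + (g x0 - x0) \<in> U" using U unfolding subgrp_def by blast
    moreover have "g (y - x0) + (g x0 - x0) = g y - x0" unfolding e by (simp add: algebra_simps)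
    ultimately have "g y - x0 \<in> U" by simp
    then show "z \<in> X" using g inX by simp
  qed
  have x0X: "x0 \<in> X" using inX U by (simp add: subgrp_def)
  have T0X: "T0 \<subseteq> X" using orbX[OF x0X] x0 by simp
  have nwC: "nsmul i w \<in> C" for i using subgrp_nsmul[OF Wg w(1)] WC by blast
  define Ti where "Ti i = (\<lambda>s. nsmul i w + s) ` T0" for i
  have Ti_orb: "Ti i = orb A (nsmul i w + x0)" for i
  proof -
    have "\<forall>f\<in>A. f (nsmul i w) = nsmul i w" using nwC Cfix by blast
    from orb_translate[OF AS this, of x0] show ?thesis unfolding Ti_def x0 by simp
  qed
  have Ti_X: "Ti i \<subseteq> X" for i
  proof -
    have "nsmul i w + x0 \<in> X" using inX nwC CU by auto
    then show ?thesis using orbX Ti_orb by simp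
  qed
  have cTi: "card (Ti i) = card T0" for i unfolding Ti_def by (rule card_image) (simp add: inj_on_def)
  have Ti_ne: "Ti i \<noteq> Ti j" if ij: "i < j" "j < p" for i j
  proof
    assume eq: "Ti i = Ti j"
    have "(\<lambda>s. - nsmul i w + s) ` Ti i = T0" unfolding Ti_def by (simp add: image_image)
    moreover have "(\<lambda>s. - nsmul i w + s) ` Ti j = (\<lambda>s. nsmul (j - i) w + s) ` T0"
    proof -
      have "nsmul j w = nsmul i w + nsmul (j - i) w" using ij nsmul_add[of i "j - i" w] by simp
      then show ?thesis unfolding Ti_def by (simp add: image_image algebra_simps)
    qed
    ultimately have "nsmul (j - i) w \<in> rad T0" using eq by (simp add: rad_def)
    moreover have "\<not> p dvd (j - i)" using ij by (simp add: nat_dvd_not_less)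
    ultimately obtain m where "nsmul m (nsmul (j - i) w) = w"
      using nsmul_inverse[OF p _ np[rule_format]] by blast
    then have "w \<in> rad T0" using rad_nsmul[OF \<open>nsmul (j - i) w \<in> rad T0\<close>, of m] by simp
    then show False using w by simp
  qed
  have Ti_disj: "Ti i \<inter> Ti j = {}" if "i \<in> {..<p}" "j \<in> {..<p}" "i \<noteq> j" for i j
  proof (rule ccontr)
    assume "Ti i \<inter> Ti j \<noteq> {}"
    then obtain z where "z \<in> Ti i" "z \<in> Ti j" by blast
    then have "Ti i = Ti j" unfolding Ti_orb using orb_meet_eq[OF AS] by blast
    then show False using Ti_ne[of i j] Ti_ne[of j i] that by (cases "i < j") auto
  qed
  have "card (\<Union>i\<in>{..<p}. Ti i) = (\<Sum>i\<in>{..<p}. card (Ti i))"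
    by (rule card_UN_disjoint) (use Ti_disj in auto)
  also have "\<dots> = p * card T0" using cTi by simp
  also have "p * card T0 \<ge> p * p ^ 3" using cT0 by (rule mult_le_mono2)
  also have "p * p ^ 3 = card X" using cX by (simp add: eval_nat_numeral)
  finally have "card (\<Union>i\<in>{..<p}. Ti i) \<ge> card X" .
  then have cover: "(\<Union>i\<in>{..<p}. Ti i) = X"
    using Ti_X by (intro card_seteq) auto
  have orb_is_Ti: "\<exists>i<p. orb A y = Ti i" if yX: "y \<in> X" for y
  proof -
    obtain i where i: "i < p" "y \<in> Ti i" using cover yX by blast
    then have "y \<in> orb A (nsmul i w + x0)" using Ti_orb by simp
    then have "orb A y = Ti i" unfolding Ti_orb by (rule orb_mem_eq[OF AS])
    then show ?thesis using i by blast
  qed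
  have finC: "finite C" by simp
  have cC: "card C > p" using psubset_card_mono[OF finC WC] assms(13) by simp
  have img: "(\<lambda>c. (\<lambda>s. c + s) ` T0) ` C \<subseteq> Ti ` {..<p}"
  proof
    fix Z assume "Z \<in> (\<lambda>c. (\<lambda>s. c + s) ` T0) ` C"
    then obtain c where c: "c \<in> C" "Z = (\<lambda>s. c + s) ` T0" by blast
    have "\<forall>f\<in>A. f c = c" using c Cfix by blast
    from orb_translate[OF AS this, of x0] have "Z = orb A (c + x0)" using c x0 by simp
    moreover have "c + x0 \<in> X" using inX c CU by auto
    ultimately show "Z \<in> Ti ` {..<p}" using orb_is_Ti by blast
  qed
  have "\<not> inj_on (\<lambda>c. (\<lambda>s. c + s) ` T0) C"
  proof
    assume inj: "inj_on (\<lambda>c. (\<lambda>s. c + s) ` T0) C"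
    have "card C = card ((\<lambda>c. (\<lambda>s. c + s) ` T0) ` C)" using card_image[OF inj] by simp
    also have "\<dots> \<le> card (Ti ` {..<p})" using img by (intro card_mono) auto
    also have "\<dots> \<le> p" using card_image_le[of "{..<p}" Ti] by simp
    finally show False using cC by simp
  qed
  then obtain c1 c2 where cc: "c1 \<in> C" "c2 \<in> C" "c1 \<noteq> c2"
      "(\<lambda>s. c1 + s) ` T0 = (\<lambda>s. c2 + s) ` T0"
    unfolding inj_on_def by blast
  define d where "d = c1 - c2"
  have dn0: "d \<noteq> 0" using cc d_def by simp
  have drad: "d \<in> rad T0"
  proof -
    have "(\<lambda>s. - c2 + s) ` ((\<lambda>s. c1 + s) ` T0) = (\<lambda>s. d + s) ` T0"
      by (simp add: image_image d_def algebra_simps)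
    moreover have "(\<lambda>s. - c2 + s) ` ((\<lambda>s. c2 + s) ` T0) = T0"
      by (simp add: image_image)
    ultimately show ?thesis using cc(4) by (simp add: rad_def)
  qed
  have dC: "d \<in> C"
  proof -
    have "\<forall>f\<in>A. f d = d"
    proof
      fix f assume f: "f \<in> A"
      have "f d = f c1 - f c2" unfolding d_def using additive_minus[OF A_add[OF AS f]] by simp
      moreover have "f c1 = c1" "f c2 = c2" using cc(1,2) Cfix f by auto
      ultimately show "f d = d" using d_def by simp
    qed
    then show ?thesis using Cfix by simp
  qed
  have dX: "d \<in> rad T'" if Tp: "T' \<in> orbitsV A" "T' \<subseteq> X" for T'
  proof -
    obtain y where y: "T' = orb A y" using Tp(1) orbitsV_orb[of T' A] by blast
    have "y \<in> X" using Tp(2) y orb_self[OF AS] by blast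
    then obtain i where "orb A y = Ti i" using orb_is_Ti by blast
    then show ?thesis using y rad_translate[OF drad] Ti_def by simp
  qed
  have dall: "d \<in> rad T" if TT: "T \<in> orbitsV A" "T \<subseteq> UNIV - U" for T
  proof -
    obtain y where y: "T = orb A y" using TT(1) orbitsV_orb[of T A] by blast
    have yU: "y \<notin> U" using TT(2) y orb_self[OF AS] by blast
    obtain k where k: "k < p" "y - nsmul k x0 \<in> U" using coset_decomp[OF p np U cU x0U] by blast
    have "k \<noteq> 0"
    proof
      assume "k = 0"
      then have "y - nsmul k x0 = y" by simp
      then show False using k(2) yU by simp
    qed
    then have kd: "\<not> p dvd k" using k by (simp add: nat_dvd_not_less)
    obtain m where m1: "\<And>z::'a. nsmul m (nsmul k z) = z" and m2: "\<And>z::'a. nsmul k (nsmul m z) = z"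
      using nsmul_inv_all[OF p kd np] by blast
    define y' where "y' = nsmul m y"
    have "nsmul m (y - nsmul k x0) = nsmul m y - nsmul m (nsmul k x0)" by (rule nsmul_diff)
    then have "y' - x0 = nsmul m (y - nsmul k x0)" unfolding y'_def m1 by simp
    then have "y' \<in> X" using inX subgrp_nsmul[OF U k(2)] by simp
    then have "orb A y' \<subseteq> X" by (rule orbX)
    then have "d \<in> rad (orb A y')" by (rule dX[OF orb_in])
    then have "nsmul m d \<in> rad (orb A y')" by (rule rad_nsmul)
    then have "nsmul k (nsmul m d) \<in> rad (nsmul k ` orb A y')" by (rule rad_scale)
    moreover have "nsmul k y' = y" unfolding y'_def by (rule m2)
    then have "nsmul k ` orb A y' = T" using orb_scale[OF AS, of k y'] y by simp
    moreover have "nsmul k (nsmul m d) = d" by (rule m2)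
    ultimately show ?thesis by simp
  qed
  define F where "F = range (\<lambda>i. nsmul i d)"
  have Fsub: "subgrp F"
    unfolding subgrp_def
  proof (intro conjI ballI)
    have "0 = nsmul 0 d" by simp
    then show "0 \<in> F" unfolding F_def by (rule range_eqI)
    fix x y assume "x \<in> F" "y \<in> F"
    then obtain i j where "x = nsmul i d" "y = nsmul j d" by (auto simp: F_def)
    then have "x + y = nsmul (i + j) d" by (simp add: nsmul_add)
    then show "x + y \<in> F" unfolding F_def by (rule range_eqI)
  next
    fix x assume "x \<in> F"
    then obtain i where i: "x = nsmul i d" by (auto simp: F_def)
    have "nsmul ((p - 1) * i) d + nsmul i d = nsmul (i * p) d"
      using p1 by (simp add: nsmul_add[symmetric] algebra_simps)
    also have "\<dots> = 0" using np by (simp add: nsmul_mult)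
    finally have "nsmul ((p - 1) * i) d = - nsmul i d" by (simp only: eq_neg_iff_add_eq_0)
    then have "- x = nsmul ((p - 1) * i) d" using i by simp
    then show "- x \<in> F" unfolding F_def by simp
  qed
  have FC: "F \<subseteq> C"
  proof
    fix z assume "z \<in> F"
    then obtain i where i: "z = nsmul i d" by (auto simp: F_def)
    have "\<forall>f\<in>A. f z = z"
    proof
      fix f assume f: "f \<in> A"
      have "f z = nsmul i (f d)" using i additive_nsmul[OF A_add[OF AS f]] by simp
      moreover have "f d = d" using dC Cfix f by blast
      ultimately show "f z = z" using i by simp
    qed
    then show "z \<in> C" using Cfix by simp
  qed
  have SF: "S_subgroup (orbitsV A) F"
    unfolding S_subgroup_def
  proof (intro conjI ballI Fsub)
    fix T assume T: "T \<in> orbitsV A"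
    show "T \<subseteq> F \<or> T \<inter> F = {}"
    proof (cases "T \<inter> F = {}")
      case False
      then obtain z where z: "z \<in> T" "z \<in> F" by blast
      obtain y where y: "T = orb A y" using T orbitsV_orb[of T A] by blast
      have "orb A z = orb A y" using z y by (intro orb_mem_eq[OF AS]) simp
      then have "T = orb A z" using y by simp
      also have "\<dots> = {z}" using orb_fix[OF AS] FC Cfix z by blast
      finally show ?thesis using z by blast
    qed simp
  qed
  have "wreath (orbitsV A) U F"
    unfolding wreath_def
  proof (intro conjI ballI impI SU SF)
    show "F \<subseteq> U" using FC CU by blast
    fix T assume "T \<in> orbitsV A" "T \<subseteq> UNIV - U"
    then have "d \<in> rad T" by (rule dall)
    then show "F \<subseteq> rad T" unfolding F_def using rad_nsmul by blast
  qed
  moreover have "F \<noteq> {0}"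
  proof
    assume "F = {0}"
    moreover have "d \<in> F"
    proof -
      have "d = nsmul 1 d" by simp
      then show ?thesis unfolding F_def by (rule range_eqI)
    qed
    ultimately show False using dn0 by simp
  qed
  ultimately have "\<exists>E F. wreath (orbitsV A) E F \<and> E \<noteq> UNIV \<and> F \<noteq> {0}" using UnU by blast
  then show False using assms(8) unfolding indecomposable_def by blast
qed


end
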